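(* There exists an integer $K=K(d)$ such that for every $\varepsilon\in(0,1)$ there is a partition of $\mathrm{Sh}^-(\varepsilon)$ into $K$ measurable sets $A_1(\varepsilon),\dots,A_K(\varepsilon)$, each of positive Lebesgue measure, with the following property: for any points $x_i\in A_i(\varepsilon)$, $i=1,\dots,K$, the connected component containing the origin of $\mathbb{R}^d\setminus\bigcup_{i=1}^K(x_i+\partial\mathbb{B})$ is contained in $\mathbb{B}_{2\varepsilon}=\{x:\|x\|<2\varepsilon\}$.
   Context: $\mathbb{B}$ is the closed unit ball in $\mathbb{R}^d$, $\partial\mathbb{B}$ the unit sphere, and $\mathrm{Sh}^-(\varepsilon)=\{x\in\mathbb{R}^d:\|x\|\in(1-\varepsilon,1)\}$ the inner spherical shell of width $\varepsilon$. *)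

theory Defs
  imports "HOL-Analysis.Analysis"
begin

definition inner_shell :: "real \<Rightarrow> 'a::euclidean_space set" where
  "inner_shell e = {x. 1 - e < norm x \<and> norm x < 1}"

end

theory Submission
  imports Defs
begin

lemma ball_pos: "0 < r \<Longrightarrow> 0 < emeasure lebesgue (ball (z::'a::euclidean_space) r)"
proof -
  assume r: "0 < r"
  have "emeasure lebesgue (ball z r) = emeasure lborel (ball z r)" by simp
  also have "\<dots> = ennreal (measure lborel (ball z r))"
    using emeasure_lborel_ball_finite[of z r] by (subst emeasure_eq_ennreal_measure) auto
  finally show ?thesis using content_ball_pos[OF r, of z] by simp
qed

lemma comp_sub_ball:
  fixes x :: "nat \<Rightarrow> 'a::euclidean_space"
  assumes "i \<in> I" "norm (x i) < 1"
  shows "connected_component_set (UNIV - (\<Union>i\<in>I. sphere (x i) 1)) 0 \<subseteq> ball (x i) 1"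
proof -
  let ?C = "connected_component_set (UNIV - (\<Union>i\<in>I. sphere (x i) 1)) 0"
  have "?C \<subseteq> UNIV - sphere (x i) 1"
    using connected_component_subset[of "UNIV - (\<Union>i\<in>I. sphere (x i) 1)" 0] assms(1)
    by blast
  then have sub: "?C \<subseteq> ball (x i) 1 \<union> (- cball (x i) 1)"
    by (auto simp: sphere_def ball_def cball_def)
  show ?thesis
  proof (cases "?C = {}")
    case True then show ?thesis by (metis empty_subsetI)
  next
    case False
    then have "0 \<in> UNIV - (\<Union>i\<in>I. sphere (x i) 1)" using connected_component_eq_empty by blast
    then have "0 \<in> ?C" by (simp add: connected_component_refl)
    moreover have "(0::'a) \<in> ball (x i) 1" using assms(2) by (simp add: dist_norm)
    ultimately have ne: "ball (x i) 1 \<inter> ?C \<noteq> {}" by blast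
    have "ball (x i) 1 \<inter> ?C = {} \<or> (- cball (x i) 1) \<inter> ?C = {}"
      by (rule connectedD[OF connected_connected_component]) (use sub in auto)
    with ne have "(- cball (x i) 1) \<inter> ?C = {}" by blast
    with sub show ?thesis by blast
  qed
qed

lemma far:
  fixes x y :: "'a::euclidean_space"
  assumes "0 < e" "e < 1" "1 - e < norm x" "norm x < 1" "2 * e \<le> norm y"
    "norm x * norm y / 2 \<le> - (x \<bullet> y)"
  shows "1 \<le> dist y x"
proof -
  define r where "r = norm y"
  define s where "s = norm x"
  have "(dist y x)^2 = r^2 + s^2 - 2 * (x \<bullet> y)"
    unfolding dist_norm r_def s_def by (simp add: power2_norm_eq_inner algebra_simps inner_commute)
  also have "\<dots> \<ge> r^2 + s^2 + r * s" using assms(6) unfolding r_def s_def by (simp add: algebra_simps)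
  finally have d: "(dist y x)^2 \<ge> r^2 + s^2 + r * s" .
  have r1: "r \<ge> 2*e" using assms unfolding r_def by simp
  have s1: "s \<ge> 1 - e" using assms unfolding s_def by simp
  have "r^2 \<ge> (2*e)^2" using r1 assms(1) by (intro power_mono) auto
  moreover have "s^2 \<ge> (1-e)^2" using s1 assms(2) by (intro power_mono) auto
  moreover have "r * s \<ge> (2*e)*(1-e)" using r1 s1 assms(1,2) by (intro mult_mono) auto
  ultimately have "(dist y x)^2 \<ge> 1 + 3*e^2" using d by (simp add: power2_eq_square algebra_simps)
  then have "(dist y x)^2 \<ge> 1" using zero_le_power2[of e] by linarith
  then have "(dist y x)^2 \<ge> 1^2" by simp
  then show ?thesis by (rule power2_le_imp_le) simp
qed

lemma unit_close:
  fixes u w p :: "'a::euclidean_space"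
  assumes "norm u = 1" "norm w = 1" "norm p = 1" "u \<bullet> p > 7/8" "w \<bullet> p > 7/8"
  shows "u \<bullet> w > 1/2"
proof -
  have uu: "u \<bullet> u = 1" "w \<bullet> w = 1" "p \<bullet> p = 1" using assms(1-3) by (simp_all add: norm_eq_1)
  have a: "(norm (u - p))^2 < (1/2)^2"
  proof -
    have "(norm (u - p))^2 < 1/4"
      using assms uu by (simp add: power2_norm_eq_inner inner_diff_left inner_diff_right inner_commute)
    then show ?thesis by (simp add: power2_eq_square)
  qed
  have b: "(norm (w - p))^2 < (1/2)^2"
  proof -
    have "(norm (w - p))^2 < 1/4"
      using assms uu by (simp add: power2_norm_eq_inner inner_diff_left inner_diff_right inner_commute)
    then show ?thesis by (simp add: power2_eq_square)
  qed
  have "norm (u - p) < 1/2" using a by (rule power2_less_imp_less) simp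
  moreover have "norm (w - p) < 1/2" using b by (rule power2_less_imp_less) simp
  ultimately have "norm (u - w) < 1"
    using norm_triangle_lt[of "u - p" "p - w" 1] by (simp add: norm_minus_commute)
  then have "(norm (u - w))^2 < 1"
    by (metis abs_norm_cancel less_one norm_ge_zero power2_less_eq_zero_iff power_less_one_iff zero_less_one_class.zero_le_one abs_square_less_1)
  then show ?thesis
    using assms uu by (simp add: power2_norm_eq_inner inner_diff_left inner_diff_right inner_commute)
qed


theorem mainTheorem9:
  shows "\<exists>K::nat. \<forall>e::real. 0 < e \<and> e < 1 \<longrightarrow>
    (\<exists>A :: nat \<Rightarrow> 'a::euclidean_space set.
       disjoint_family_on A {1..K} \<and>
       (\<Union>i\<in>{1..K}. A i) = inner_shell e \<and>
       (\<forall>i\<in>{1..K}. A i \<in> sets lebesgue \<and> emeasure lebesgue (A i) > 0) \<and>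
       (\<forall>x :: nat \<Rightarrow> 'a. (\<forall>i\<in>{1..K}. x i \<in> A i) \<longrightarrow>
          connected_component_set (UNIV - (\<Union>i\<in>{1..K}. sphere (x i) 1)) 0
            \<subseteq> ball 0 (2 * e)))"
proof -
  obtain P :: "'a set" where P: "P \<subseteq> sphere 0 1" "finite P" "sphere 0 1 \<subseteq> (\<Union>c\<in>P. ball c (1/2))"
  proof -
    have "sphere (0::'a) 1 \<subseteq> (\<Union>c\<in>sphere 0 1. ball c (1/2))"
    proof
      fix x :: 'a assume xs: "x \<in> sphere 0 1"
      have "x \<in> ball x (1/2)" by simp
      then show "x \<in> (\<Union>c\<in>sphere 0 1. ball c (1/2))" using xs by blast
    qed
    then obtain C' where "C' \<subseteq> sphere (0::'a) 1" "finite C'" "sphere 0 1 \<subseteq> (\<Union>c\<in>C'. ball c (1/2))"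
      using compactE_image[OF compact_sphere, of "sphere (0::'a) 1" "\<lambda>c. ball c (1/2)"] by blast
    then show ?thesis using that by blast
  qed
  define K where "K = card P"
  obtain p where bij: "bij_betw p {1..K} P"
    using ex_bij_betw_nat_finite_1[OF P(2)] unfolding K_def by blast
  have pn: "norm (p i) = 1" if "i \<in> {1..K}" for i
  proof -
    have "p i \<in> P" using bij_betwE[OF bij] that by blast
    then show ?thesis using P(1) by auto
  qed
  have pinj: "p i \<noteq> p k" if "i \<in> {1..K}" "k \<in> {1..K}" "i \<noteq> k" for i k
    using bij_betw_imp_inj_on[OF bij] that unfolding inj_on_def by blast
  have net: "\<exists>j\<in>{1..K}. w \<bullet> p j > 7/8" if "norm w = 1" for w :: 'a
  proof -
    have "w \<in> sphere 0 1" using that by simp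
    then obtain c where c0: "c \<in> P" "w \<in> ball c (1/2)" using P(3) by blast
    then have c: "c \<in> P" "dist c w < 1/2" by simp_all
    then obtain j where j: "j \<in> {1..K}" "p j = c" using bij_betw_imp_surj_on[OF bij] by blast
    have "norm c = 1" using c P(1) by auto
    have "norm (w - c) < 1/2" using c(2) by (simp add: dist_norm norm_minus_commute)
    then have "(norm (w - c))^2 < (1/2)^2"
      using power_strict_mono[of "norm (w - c)" "1/2" 2] by simp
    then have "(norm (w - c))^2 < 1/4" by (simp add: power2_eq_square)
    then have "w \<bullet> c > 7/8"
      using that \<open>norm c = 1\<close> by (simp add: power2_norm_eq_inner inner_diff_left inner_diff_right inner_commute norm_eq_1)
    then show ?thesis using j by auto
  qed
  have Kpos: "1 \<le> K"
  proof -
    obtain b :: 'a where "b \<in> Basis" using nonempty_Basis by blast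
    then have "norm b = 1" by simp
    then show ?thesis using net[of b] by auto
  qed
  show ?thesis
  proof (rule exI[of _ K], intro allI impI)
    fix e :: real
    assume e: "0 < e \<and> e < 1"
    define A where "A i = {x \<in> inner_shell e. (\<forall>k\<in>{1..K}. x \<bullet> p k \<le> x \<bullet> p i) \<and>
                              (\<forall>k\<in>{1..K}. k < i \<longrightarrow> x \<bullet> p k < x \<bullet> p i)}" for i
    have disj: "disjoint_family_on A {1..K}"
    proof (unfold disjoint_family_on_def, intro ballI impI)
      fix i j assume ij: "i \<in> {1..K}" "j \<in> {1..K}" "i \<noteq> j"
      show "A i \<inter> A j = {}"
      proof (rule ccontr)
        assume "A i \<inter> A j \<noteq> {}"
        then obtain z where z: "z \<in> A i" "z \<in> A j" by blast
        have ai: "\<forall>k\<in>{1..K}. z \<bullet> p k \<le> z \<bullet> p i" "\<forall>k\<in>{1..K}. k < i \<longrightarrow> z \<bullet> p k < z \<bullet> p i"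
          using z(1) unfolding A_def by blast+
        have aj: "\<forall>k\<in>{1..K}. z \<bullet> p k \<le> z \<bullet> p j" "\<forall>k\<in>{1..K}. k < j \<longrightarrow> z \<bullet> p k < z \<bullet> p j"
          using z(2) unfolding A_def by blast+
        show False
        proof (cases "i < j")
          case True
          then have "z \<bullet> p i < z \<bullet> p j" using aj(2) ij(1) by blast
          moreover have "z \<bullet> p j \<le> z \<bullet> p i" using ai(1) ij(2) by blast
          ultimately show False by linarith
        next
          case False then have "j < i" using ij by simp
          then have "z \<bullet> p j < z \<bullet> p i" using ai(2) ij(2) by blast
          moreover have "z \<bullet> p i \<le> z \<bullet> p j" using aj(1) ij(1) by blast
          ultimately show False by linarith
        qed
      qed
    qed
    have cover: "(\<Union>i\<in>{1..K}. A i) = inner_shell e"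
    proof
      show "(\<Union>i\<in>{1..K}. A i) \<subseteq> inner_shell e" unfolding A_def by auto
    next
      show "inner_shell e \<subseteq> (\<Union>i\<in>{1..K}. A i)"
      proof
        fix x :: 'a assume x: "x \<in> inner_shell e"
        define Q where "Q i \<longleftrightarrow> i \<in> {1..K} \<and> (\<forall>k\<in>{1..K}. x \<bullet> p k \<le> x \<bullet> p i)" for i
        define M where "M = Max ((\<lambda>k. x \<bullet> p k) ` {1..K})"
        have "M \<in> (\<lambda>k. x \<bullet> p k) ` {1..K}" unfolding M_def using Kpos by (intro Max_in) auto
        then obtain j where j: "j \<in> {1..K}" "x \<bullet> p j = M" by auto
        have "Q j" unfolding Q_def using j M_def by auto
        define i where "i = (LEAST i. Q i)"
        have Qi: "Q i" unfolding i_def by (rule LeastI[of Q j, OF \<open>Q j\<close>])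
        have lt: "x \<bullet> p k < x \<bullet> p i" if kK: "k \<in> {1..K}" "k < i" for k
        proof -
          have "\<not> Q k" using not_less_Least[of k Q] kK(2) unfolding i_def by blast
          then have "\<exists>k'\<in>{1..K}. x \<bullet> p k' > x \<bullet> p k" using kK(1) unfolding Q_def by (auto simp: not_le)
          then obtain k' where k': "k' \<in> {1..K}" "x \<bullet> p k' > x \<bullet> p k" by blast
          have "x \<bullet> p k' \<le> x \<bullet> p i" using Qi k'(1) unfolding Q_def by blast
          then show ?thesis using k'(2) by linarith
        qed
        have "x \<in> A i" unfolding A_def using x Qi lt unfolding Q_def by auto
        then show "x \<in> (\<Union>i\<in>{1..K}. A i)" using Qi unfolding Q_def by auto
      qed
    qed
    have shell_open: "open (inner_shell e :: 'a set)"
    proof -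
      have "inner_shell e = {x::'a. 1 - e < norm x} \<inter> {x. norm x < 1}" unfolding inner_shell_def by auto
      then show ?thesis by (simp add: open_Int open_Collect_less continuous_on_norm continuous_on_const)
    qed
    have meas: "A i \<in> sets lebesgue \<and> emeasure lebesgue (A i) > 0" if i: "i \<in> {1..K}" for i
    proof
      have eqA: "A i = inner_shell e \<inter> (\<Inter>k\<in>{1..K}. {x. x \<bullet> p k \<le> x \<bullet> p i})
                   \<inter> (\<Inter>k\<in>{k\<in>{1..K}. k < i}. {x. x \<bullet> p k < x \<bullet> p i})"
        unfolding A_def by auto
      have c1: "closed (\<Inter>k\<in>{1..K}. {x::'a. x \<bullet> p k \<le> x \<bullet> p i})"
        by (intro closed_INT ballI closed_Collect_le continuous_intros)
      have o1: "open (\<Inter>k\<in>{k\<in>{1..K}. k < i}. {x::'a. x \<bullet> p k < x \<bullet> p i})"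
        by (intro open_INT finite_Collect_conjI ballI open_Collect_less continuous_intros) auto
      have "A i \<in> sets borel" unfolding eqA
        using shell_open c1 o1 by (intro sets.Int borel_open borel_closed) auto
      then show "A i \<in> sets lebesgue" by simp
    next
      define Ob where "Ob = inner_shell e \<inter> (\<Inter>k\<in>{1..K}-{i}. {x::'a. x \<bullet> p k < x \<bullet> p i})"
      have "open Ob" unfolding Ob_def using shell_open
        by (intro open_Int open_INT ballI open_Collect_less continuous_intros) auto
      have OA: "Ob \<subseteq> A i"
      proof
        fix x assume xO: "x \<in> Ob"
        have st: "x \<bullet> p k < x \<bullet> p i" if "k \<in> {1..K}" "k \<noteq> i" for k
          using xO that unfolding Ob_def by blast
        have "x \<bullet> p k \<le> x \<bullet> p i" if "k \<in> {1..K}" for k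
          using st[OF that] by (cases "k = i") auto
        moreover have "x \<in> inner_shell e" using xO unfolding Ob_def by blast
        ultimately show "x \<in> A i" unfolding A_def using st by auto
      qed
      define z where "z = (1 - e/2) *\<^sub>R p i"
      have zO: "z \<in> Ob"
      proof -
        have "norm z = 1 - e/2" unfolding z_def using pn[OF i] e by simp
        then have "z \<in> inner_shell e" using e unfolding inner_shell_def by simp
        moreover have "z \<bullet> p k < z \<bullet> p i" if k: "k \<in> {1..K}-{i}" for k
        proof -
          have "(norm (p k - p i))^2 > 0" using pinj[of k i] k i by auto
          then have "p k \<bullet> p i < 1" using pn[of k] pn[OF i] k
            by (simp add: power2_norm_eq_inner inner_diff_left inner_diff_right inner_commute norm_eq_1)
          moreover have "p i \<bullet> p i = 1" using pn[OF i] by (simp add: norm_eq_1)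
          ultimately show ?thesis unfolding z_def using e by (simp add: inner_commute)
        qed
        ultimately show ?thesis unfolding Ob_def by auto
      qed
      obtain r where r: "r > 0" "ball z r \<subseteq> Ob" using \<open>open Ob\<close> zO open_contains_ball by blast
      have "0 < emeasure lebesgue (ball z r)" by (rule ball_pos[OF r(1)])
      also have "\<dots> \<le> emeasure lebesgue (A i)"
      proof (rule emeasure_mono)
        show "ball z r \<subseteq> A i" using r OA by blast
        show "A i \<in> sets lebesgue"
        proof -
          have eqA: "A i = inner_shell e \<inter> (\<Inter>k\<in>{1..K}. {x. x \<bullet> p k \<le> x \<bullet> p i})
                   \<inter> (\<Inter>k\<in>{k\<in>{1..K}. k < i}. {x. x \<bullet> p k < x \<bullet> p i})"
            unfolding A_def by auto
          have c1: "closed (\<Inter>k\<in>{1..K}. {x::'a. x \<bullet> p k \<le> x \<bullet> p i})"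
            by (intro closed_INT ballI closed_Collect_le continuous_intros)
          have o1: "open (\<Inter>k\<in>{k\<in>{1..K}. k < i}. {x::'a. x \<bullet> p k < x \<bullet> p i})"
            by (intro open_INT finite_Collect_conjI ballI open_Collect_less continuous_intros) auto
          have "A i \<in> sets borel" unfolding eqA
            using shell_open c1 o1 by (intro sets.Int borel_open borel_closed) auto
          then show ?thesis by simp
        qed
      qed
      finally show "emeasure lebesgue (A i) > 0" .
    qed
    have main: "connected_component_set (UNIV - (\<Union>i\<in>{1..K}. sphere (x i) 1)) 0 \<subseteq> ball 0 (2 * e)"
      if x: "\<forall>i\<in>{1..K}. x i \<in> A i" for x :: "nat \<Rightarrow> 'a"
    proof
      fix y assume yC: "y \<in> connected_component_set (UNIV - (\<Union>i\<in>{1..K}. sphere (x i) 1)) 0"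
      have xs: "x i \<in> inner_shell e" if "i \<in> {1..K}" for i using x that unfolding A_def by auto
      have inb: "dist (x i) y < 1" if "i \<in> {1..K}" for i
        using comp_sub_ball[of i "{1..K}" x] xs[OF that] that yC unfolding inner_shell_def by auto
      show "y \<in> ball 0 (2 * e)"
      proof (rule ccontr)
        assume "y \<notin> ball 0 (2 * e)"
        then have ny: "norm y \<ge> 2 * e" by simp
        then have y0: "y \<noteq> 0" using e by auto
        define w where "w = - (y /\<^sub>R norm y)"
        have wn: "norm w = 1" unfolding w_def using y0 by simp
        obtain j where j: "j \<in> {1..K}" "w \<bullet> p j > 7/8" using net[OF wn] by blast
        have xj: "1 - e < norm (x j)" "norm (x j) < 1" using xs[OF j(1)] unfolding inner_shell_def by auto
        then have xj0: "norm (x j) > 0" using e by linarith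
        define u where "u = x j /\<^sub>R norm (x j)"
        have un: "norm u = 1" unfolding u_def using xj0 by simp
        obtain k where k: "k \<in> {1..K}" "u \<bullet> p k > 7/8" using net[OF un] by blast
        have "x j \<bullet> p k \<le> x j \<bullet> p j" using x j(1) k(1) unfolding A_def by auto
        then have "u \<bullet> p k \<le> u \<bullet> p j" unfolding u_def using xj0 by (simp add: divide_right_mono)
        then have "u \<bullet> p j > 7/8" using k by linarith
        then have uw: "u \<bullet> w > 1/2" using unit_close[OF un wn pn[OF j(1)]] j by blast
        have "- (x j \<bullet> y) = norm (x j) * norm y * (u \<bullet> w)"
          unfolding u_def w_def using xj0 y0 by (simp add: field_simps)
        also have "\<dots> \<ge> norm (x j) * norm y * (1/2)"
          using uw xj0 y0 by (intro mult_left_mono) auto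
        finally have "norm (x j) * norm y / 2 \<le> - (x j \<bullet> y)" by simp
        then have "1 \<le> dist y (x j)" using far[of e "x j" y] e xj ny by auto
        then show False using inb[OF j(1)] by (simp add: dist_commute)
      qed
    qed
    show "\<exists>A :: nat \<Rightarrow> 'a set.
       disjoint_family_on A {1..K} \<and>
       (\<Union>i\<in>{1..K}. A i) = inner_shell e \<and>
       (\<forall>i\<in>{1..K}. A i \<in> sets lebesgue \<and> emeasure lebesgue (A i) > 0) \<and>
       (\<forall>x :: nat \<Rightarrow> 'a. (\<forall>i\<in>{1..K}. x i \<in> A i) \<longrightarrow>
          connected_component_set (UNIV - (\<Union>i\<in>{1..K}. sphere (x i) 1)) 0
            \<subseteq> ball 0 (2 * e))"
      using disj cover meas main by blast
  qed
qed

end
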